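(* Let $\mathcal L:\mathcal Y\times\mathbb R\to\mathbb R$ be continuously differentiable and $\mu$-strongly convex, and fix $\varepsilon>0$. (1) If $n\ge1$ and $f_1,f_2\in\mathrm{NN}_n$ satisfy $R(f_i)\le R(\mathrm{NN}_n)+\varepsilon$ for $i\in\{1,2\}$, then $D(f_1,f_2)\le\frac8\mu\big(R(\mathrm{NN}_n)-R(\mathrm{NN}_{2n})+\varepsilon\big)$. (2) If $d\ge1$ and $f_1,f_2\in\mathsf{Tree}_d$ satisfy $R(f_i)\le R(\mathsf{Tree}_d)+\varepsilon$ for $i\in\{1,2\}$, then $D(f_1,f_2)\le\frac8\mu\big(R(\mathsf{Tree}_d)-R(\mathsf{Tree}_{2d})+\varepsilon\big)$.
   Context: $P$ is a distribution on $\mathcal X\times\mathcal Y$ with $\mathcal X\subseteq\mathbb R^m$; expectations are over $(x,y)\sim P$. $\mathcal L$ is $\mu$-strongly convex if $\mathcal L(y,p_1)\ge\mathcal L(y,p_2)+\partial_p\mathcal L(y,p_2)(p_1-p_2)+\frac\mu2(p_1-p_2)^2$ for all $y,p_1,p_2$. $R(f)=\mathbb E[\mathcal L(y,f(x))]$, $R(\mathcal F)=\inf_{f\in\mathcal F}R(f)$, $D(f_1,f_2)=\mathbb E[(f_1(x)-f_2(x))^2]$. With $\sigma(t)=\max\{0,t\}$, $\mathrm{NN}_n$ is the class of real-valued functions on $\mathcal X$ computable by a finite directed acyclic graph with at most $n$ internal nodes, each computing $\sigma(\langle w,u\rangle+b)$ of its inputs $u$, with an output node computing an affine combination of the input coordinates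 and internal node values. $\mathsf{Tree}_d$ is the class of predictors computed by axis-aligned regression trees of depth at most $d$: rooted binary trees whose internal nodes are labeled by a coordinate $j\in[m]$ and threshold $t$ (routing $x$ left iff $x_j\le t$) and whose leaves are labeled by constants in $[0,1]$. *)

theory Defs
  imports "HOL-Probability.Probability"
begin

definition relu :: "real \<Rightarrow> real" where
  "relu t = max 0 t"

text \<open>A finite DAG is written in topological
order: internal node i (i < k) receives the input coordinates (weights A i) and the values of
the earlier internal nodes l < i (weights C i l; weight 0 = no edge); the output node is an
affine combination of the input coordinates and all internal node values.\<close>
definition NN :: "nat \<Rightarrow> (real ^ 'm \<Rightarrow> real) set" where
  "NN n = {f. \<exists>k \<le> n. \<exists>(A :: nat \<Rightarrow> real ^ 'm) (C :: nat \<Rightarrow> nat \<Rightarrow> real) (b :: nat \<Rightarrow> real)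
                 (\<alpha> :: real ^ 'm) (\<beta> :: nat \<Rightarrow> real) (\<gamma> :: real).
             \<forall>x. \<exists>v :: nat \<Rightarrow> real.
                 (\<forall>i < k. v i = relu (A i \<bullet> x + (\<Sum>l<i. C i l * v l) + b i)) \<and>
                 f x = \<alpha> \<bullet> x + (\<Sum>l<k. \<beta> l * v l) + \<gamma>}"

datatype 'm rtree = Leaf real | Node 'm real "'m rtree" "'m rtree"

fun tdepth :: "'m rtree \<Rightarrow> nat" where
  "tdepth (Leaf c) = 0"
| "tdepth (Node j t l r) = Suc (max (tdepth l) (tdepth r))"

fun leaves_ok :: "'m rtree \<Rightarrow> bool" where
  "leaves_ok (Leaf c) = (0 \<le> c \<and> c \<le> 1)"
| "leaves_ok (Node j t l r) = (leaves_ok l \<and> leaves_ok r)"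

fun teval :: "'m rtree \<Rightarrow> real ^ 'm \<Rightarrow> real" where
  "teval (Leaf c) x = c"
| "teval (Node j t l r) x = (if x $ j \<le> t then teval l x else teval r x)"

definition Tree :: "nat \<Rightarrow> (real ^ 'm \<Rightarrow> real) set" where
  "Tree d = {teval t | t. tdepth t \<le> d \<and> leaves_ok t}"

definition risk :: "((real ^ 'm) \<times> 'y) measure \<Rightarrow> ('y \<Rightarrow> real \<Rightarrow> real) \<Rightarrow> (real ^ 'm \<Rightarrow> real) \<Rightarrow> real" where
  "risk P L f = (\<integral>z. L (snd z) (f (fst z)) \<partial>P)"

definition class_risk :: "((real ^ 'm) \<times> 'y) measure \<Rightarrow> ('y \<Rightarrow> real \<Rightarrow> real) \<Rightarrow> (real ^ 'm \<Rightarrow> real) set \<Rightarrow> ereal" where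
  "class_risk P L F = (INF f\<in>F. ereal (risk P L f))"

definition dist2 :: "((real ^ 'm) \<times> 'y) measure \<Rightarrow> (real ^ 'm \<Rightarrow> real) \<Rightarrow> (real ^ 'm \<Rightarrow> real) \<Rightarrow> real" where
  "dist2 P f1 f2 = (\<integral>z. (f1 (fst z) - f2 (fst z))^2 \<partial>P)"

definition strongly_convex_loss :: "real \<Rightarrow> ('y \<Rightarrow> real \<Rightarrow> real) \<Rightarrow> ('y \<Rightarrow> real \<Rightarrow> real) \<Rightarrow> bool" where
  "strongly_convex_loss \<mu> L L' \<longleftrightarrow>
     (\<forall>y p1 p2. L y p1 \<ge> L y p2 + L' y p2 * (p1 - p2) + \<mu> / 2 * (p1 - p2)^2)"

end

theory Submission
  imports Defs
begin

lemma sum_lessThan_split_add: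
  "sum f {..<(a::nat)+b} = sum f {..<a} + (\<Sum>j<b. f (a+j))"
  by (induction b) (simp_all add: add.assoc)

lemma ex_le_mono': "(n::nat) \<le> n' \<Longrightarrow> \<exists>k\<le>n. Q k \<Longrightarrow> \<exists>k\<le>n'. Q k"
  by (auto intro: le_trans)

lemma NN_mono: assumes "n \<le> n'" shows "NN n \<subseteq> NN n'"
  unfolding NN_def
  apply (rule Collect_mono)
  apply (rule impI, erule ex_le_mono'[OF assms])
  done

lemma NN_mid:
  assumes "f1 \<in> NN n" "f2 \<in> NN n"
  shows "(\<lambda>x. (f1 x + f2 x) / 2) \<in> NN (2*n)"
proof -
  obtain k1 A1 C1 b1 \<alpha>1 \<beta>1 \<gamma>1 where k1: "k1 \<le> n" and
    h1: "\<forall>x. \<exists>v :: nat \<Rightarrow> real.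
                 (\<forall>i < k1. v i = relu (A1 i \<bullet> x + (\<Sum>l<i. C1 i l * v l) + b1 i)) \<and>
                 f1 x = \<alpha>1 \<bullet> x + (\<Sum>l<k1. \<beta>1 l * v l) + \<gamma>1"
    using assms(1) unfolding NN_def mem_Collect_eq by (elim exE conjE) (rule that)
  obtain k2 A2 C2 b2 \<alpha>2 \<beta>2 \<gamma>2 where k2: "k2 \<le> n" and
    h2: "\<forall>x. \<exists>v :: nat \<Rightarrow> real.
                 (\<forall>i < k2. v i = relu (A2 i \<bullet> x + (\<Sum>l<i. C2 i l * v l) + b2 i)) \<and>
                 f2 x = \<alpha>2 \<bullet> x + (\<Sum>l<k2. \<beta>2 l * v l) + \<gamma>2"
    using assms(2) unfolding NN_def mem_Collect_eq by (elim exE conjE) (rule that)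
  define A where "A i = (if i < k1 then A1 i else A2 (i - k1))" for i
  define C where "C i l = (if i < k1 then C1 i l else if l < k1 then 0 else C2 (i - k1) (l - k1))" for i l
  define b where "b i = (if i < k1 then b1 i else b2 (i - k1))" for i
  define \<beta> where "\<beta> l = (if l < k1 then \<beta>1 l / 2 else \<beta>2 (l - k1) / 2)" for l
  have main: "\<forall>x. \<exists>v :: nat \<Rightarrow> real.
                 (\<forall>i < k1 + k2. v i = relu (A i \<bullet> x + (\<Sum>l<i. C i l * v l) + b i)) \<and>
                 (f1 x + f2 x) / 2 = ((\<alpha>1 + \<alpha>2) /\<^sub>R 2) \<bullet> x + (\<Sum>l<k1 + k2. \<beta> l * v l) + (\<gamma>1 + \<gamma>2) / 2"
  proof
    fix x
    obtain v1 where v1: "\<forall>i < k1. v1 i = relu (A1 i \<bullet> x + (\<Sum>l<i. C1 i l * v1 l) + b1 i)"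
      "f1 x = \<alpha>1 \<bullet> x + (\<Sum>l<k1. \<beta>1 l * v1 l) + \<gamma>1" using spec[OF h1, of x] by (elim exE conjE) (rule that)
    obtain v2 where v2: "\<forall>i < k2. v2 i = relu (A2 i \<bullet> x + (\<Sum>l<i. C2 i l * v2 l) + b2 i)"
      "f2 x = \<alpha>2 \<bullet> x + (\<Sum>l<k2. \<beta>2 l * v2 l) + \<gamma>2" using spec[OF h2, of x] by (elim exE conjE) (rule that)
    define v where "v l = (if l < k1 then v1 l else v2 (l - k1))" for l
    have node: "v i = relu (A i \<bullet> x + (\<Sum>l<i. C i l * v l) + b i)" if "i < k1 + k2" for i
    proof (cases "i < k1")
      case True
      have "(\<Sum>l<i. C i l * v l) = (\<Sum>l<i. C1 i l * v1 l)"
        using True by (intro sum.cong) (auto simp: C_def v_def)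
      moreover have "v i = v1 i" "A i = A1 i" "b i = b1 i" using True by (simp_all add: v_def A_def b_def)
      moreover have "v1 i = relu (A1 i \<bullet> x + (\<Sum>l<i. C1 i l * v1 l) + b1 i)"
        by (rule v1(1)[rule_format, OF True])
      ultimately show ?thesis by simp
    next
      case False
      define j where "j = i - k1"
      have j: "i = k1 + j" "j < k2" using False that unfolding j_def by simp_all
      have "(\<Sum>l<i. C i l * v l) = (\<Sum>l<k1. C i l * v l) + (\<Sum>l<j. C i (k1+l) * v (k1+l))"
        unfolding j(1) by (rule sum_lessThan_split_add)
      also have "(\<Sum>l<k1. C i l * v l) = 0" using False by (simp add: C_def)
      also have "(\<Sum>l<j. C i (k1+l) * v (k1+l)) = (\<Sum>l<j. C2 j l * v2 l)"
        using j False by (simp add: C_def v_def)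
      finally have s: "(\<Sum>l<i. C i l * v l) = (\<Sum>l<j. C2 j l * v2 l)" by simp
      have "v i = v2 j" "A i = A2 j" "b i = b2 j" using False j by (simp_all add: v_def A_def b_def)
      moreover have "v2 j = relu (A2 j \<bullet> x + (\<Sum>l<j. C2 j l * v2 l) + b2 j)"
        by (rule v2(1)[rule_format, OF j(2)])
      ultimately show ?thesis using s by simp
    qed
    have sumeq: "(\<Sum>l<k1 + k2. \<beta> l * v l) = (\<Sum>l<k1. \<beta>1 l * v1 l)/2 + (\<Sum>l<k2. \<beta>2 l * v2 l)/2"
    proof -
      have "(\<Sum>l<k1 + k2. \<beta> l * v l) = (\<Sum>l<k1. \<beta> l * v l) + (\<Sum>l<k2. \<beta> (k1+l) * v (k1+l))"
        by (rule sum_lessThan_split_add)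
      also have "(\<Sum>l<k1. \<beta> l * v l) = (\<Sum>l<k1. \<beta>1 l * v1 l)/2"
        unfolding sum_divide_distrib by (intro sum.cong) (auto simp: \<beta>_def v_def)
      also have "(\<Sum>l<k2. \<beta> (k1+l) * v (k1+l)) = (\<Sum>l<k2. \<beta>2 l * v2 l)/2"
        unfolding sum_divide_distrib by (intro sum.cong) (auto simp: \<beta>_def v_def)
      finally show ?thesis .
    qed
    have inn: "((\<alpha>1 + \<alpha>2) /\<^sub>R 2) \<bullet> x = (\<alpha>1 \<bullet> x + \<alpha>2 \<bullet> x) / 2"
      by (simp add: inner_add_left)
    have out: "(f1 x + f2 x) / 2 = ((\<alpha>1 + \<alpha>2) /\<^sub>R 2) \<bullet> x + (\<Sum>l<k1 + k2. \<beta> l * v l) + (\<gamma>1 + \<gamma>2) / 2"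
      unfolding sumeq inn v1(2) v2(2) by argo
    show "\<exists>v :: nat \<Rightarrow> real.
                 (\<forall>i < k1 + k2. v i = relu (A i \<bullet> x + (\<Sum>l<i. C i l * v l) + b i)) \<and>
                 (f1 x + f2 x) / 2 = ((\<alpha>1 + \<alpha>2) /\<^sub>R 2) \<bullet> x + (\<Sum>l<k1 + k2. \<beta> l * v l) + (\<gamma>1 + \<gamma>2) / 2"
      using node out by blast
  qed
  have le: "k1 + k2 \<le> 2 * n" using k1 k2 by simp
  show ?thesis unfolding NN_def mem_Collect_eq
    apply (rule exI[of _ "k1+k2"])
    apply (rule conjI[OF le])
    apply (rule exI[of _ A], rule exI[of _ C], rule exI[of _ b], rule exI[of _ "(\<alpha>1 + \<alpha>2) /\<^sub>R 2"],
        rule exI[of _ \<beta>], rule exI[of _ "(\<gamma>1 + \<gamma>2) / 2"])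
    apply (rule main)
    done
qed

fun mapleaf :: "(real \<Rightarrow> real) \<Rightarrow> 'm rtree \<Rightarrow> 'm rtree" where
  "mapleaf f (Leaf c) = Leaf (f c)"
| "mapleaf f (Node j t l r) = Node j t (mapleaf f l) (mapleaf f r)"

fun graft :: "'m rtree \<Rightarrow> 'm rtree \<Rightarrow> 'm rtree" where
  "graft (Leaf c) t2 = mapleaf (\<lambda>c'. (c + c') / 2) t2"
| "graft (Node j t l r) t2 = Node j t (graft l t2) (graft r t2)"

lemma mapleaf_props:
  "teval (mapleaf f t) x = f (teval t x)" "tdepth (mapleaf f t) = tdepth t"
  by (induction t) auto

lemma mapleaf_ok: "leaves_ok t \<Longrightarrow> (\<And>c. 0 \<le> c \<Longrightarrow> c \<le> 1 \<Longrightarrow> 0 \<le> f c \<and> f c \<le> 1) \<Longrightarrow> leaves_ok (mapleaf f t)"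
  by (induction t) auto

lemma graft_props:
  "teval (graft t1 t2) x = (teval t1 x + teval t2 x) / 2"
  "tdepth (graft t1 t2) \<le> tdepth t1 + tdepth t2"
  "leaves_ok t1 \<Longrightarrow> leaves_ok t2 \<Longrightarrow> leaves_ok (graft t1 t2)"
    apply (induction t1) apply (auto simp: mapleaf_props intro!: mapleaf_ok)
  done

lemma Tree_mono: "d \<le> d' \<Longrightarrow> Tree d \<subseteq> Tree d'"
  unfolding Tree_def by auto

lemma Tree_mid:
  assumes "f1 \<in> Tree d" "f2 \<in> Tree d"
  shows "(\<lambda>x. (f1 x + f2 x) / 2) \<in> Tree (2*d)"
proof -
  obtain t1 t2 where t: "f1 = teval t1" "tdepth t1 \<le> d" "leaves_ok t1"
    "f2 = teval t2" "tdepth t2 \<le> d" "leaves_ok t2"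
    using assms unfolding Tree_def by blast
  have "(\<lambda>x. (f1 x + f2 x) / 2) = teval (graft t1 t2)"
    using t by (auto simp: graft_props)
  moreover have "tdepth (graft t1 t2) \<le> 2 * d"
    using graft_props(2)[of t1 t2] t by simp
  ultimately show ?thesis unfolding Tree_def using t graft_props(3) by blast
qed

lemma aux_lin:
  fixes A B M p q p' q' Q R :: real
  assumes "A \<ge> M + p + q" "B \<ge> M + p' + q'" "p + p' = 0" "q + q' = Q" "R = Q / 2"
  shows "R \<le> (A + B) / 2 - M"
  using assms by argo

lemma midpoint_ineq:
  assumes "strongly_convex_loss \<mu> L L'"
  shows "\<mu> / 8 * (a - b)^2 \<le> (L y a + L y b) / 2 - L y ((a + b) / 2)"
proof -
  let ?m = "(a + b) / 2"
  have 1: "L y a \<ge> L y ?m + L' y ?m * (a - ?m) + \<mu> / 2 * (a - ?m)^2"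
    using assms unfolding strongly_convex_loss_def by blast
  have 2: "L y b \<ge> L y ?m + L' y ?m * (b - ?m) + \<mu> / 2 * (b - ?m)^2"
    using assms unfolding strongly_convex_loss_def by blast
  have e1: "L' y ?m * (a - ?m) + L' y ?m * (b - ?m) = 0" by (simp add: field_simps)
  have e2: "\<mu> / 2 * (a - ?m)^2 + \<mu> / 2 * (b - ?m)^2 = \<mu> / 4 * (a - b)^2"
    by (simp add: field_simps power2_eq_square)
  have e3: "\<mu> / 8 * (a - b)^2 = (\<mu> / 4 * (a - b)^2) / 2" by simp
  show ?thesis by (rule aux_lin[OF 1 2 e1 e2 e3])
qed

lemma generic:
  fixes P :: "((real ^ 'm) \<times> 'y) measure"
  assumes "prob_space P" "\<mu> > 0" "strongly_convex_loss \<mu> L L'" "\<epsilon> > 0"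
    and intg: "\<forall>f\<in>G. integrable P (\<lambda>z. L (snd z) (f (fst z)))"
    and sub: "F \<subseteq> G" and f1: "f1 \<in> F" and f2: "f2 \<in> F"
    and mid: "(\<lambda>x. (f1 x + f2 x) / 2) \<in> G"
    and h1: "ereal (risk P L f1) \<le> class_risk P L F + ereal \<epsilon>"
    and h2: "ereal (risk P L f2) \<le> class_risk P L F + ereal \<epsilon>"
  shows "ereal (dist2 P f1 f2) \<le> ereal (8 / \<mu>) * (class_risk P L F - class_risk P L G + ereal \<epsilon>)"
proof -
  define g where "g = (\<lambda>x. (f1 x + f2 x) / 2)"
  define a where "a = risk P L f1"
  define b where "b = risk P L f2"
  define c where "c = risk P L g"
  define D where "D = dist2 P f1 f2"
  have i1: "integrable P (\<lambda>z. L (snd z) (f1 (fst z)))" by (rule bspec[OF intg subsetD[OF sub f1]])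
  have i2: "integrable P (\<lambda>z. L (snd z) (f2 (fst z)))" by (rule bspec[OF intg subsetD[OF sub f2]])
  have ig: "integrable P (\<lambda>z. L (snd z) (g (fst z)))" unfolding g_def by (rule bspec[OF intg mid])
  have pw: "\<mu> / 8 * (f1 (fst z) - f2 (fst z))^2 \<le>
      (L (snd z) (f1 (fst z)) + L (snd z) (f2 (fst z))) / 2 - L (snd z) (g (fst z))" for z :: "(real ^ 'm) \<times> 'y"
    unfolding g_def by (rule midpoint_ineq[OF assms(3)])
  have irhs: "integrable P (\<lambda>z. (L (snd z) (f1 (fst z)) + L (snd z) (f2 (fst z))) / 2 - L (snd z) (g (fst z)))"
    by (intro Bochner_Integration.integrable_diff Bochner_Integration.integrable_divide_zero Bochner_Integration.integrable_add i1 i2 ig)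
  have irhs_eq: "(\<integral>z. (L (snd z) (f1 (fst z)) + L (snd z) (f2 (fst z))) / 2 - L (snd z) (g (fst z)) \<partial>P)
      = (a + b) / 2 - c"
    unfolding a_def b_def c_def risk_def
    by (simp only: Bochner_Integration.integral_diff[OF Bochner_Integration.integrable_divide_zero[OF Bochner_Integration.integrable_add[OF i1 i2]] ig]
      Bochner_Integration.integral_divide_zero Bochner_Integration.integral_add[OF i1 i2])
  have key: "\<mu> / 8 * D \<le> (a + b) / 2 - c"
  proof (cases "integrable P (\<lambda>z. (f1 (fst z) - f2 (fst z))^2)")
    case True
    have "\<mu> / 8 * D = (\<integral>z. \<mu> / 8 * (f1 (fst z) - f2 (fst z))^2 \<partial>P)"
      unfolding D_def dist2_def by (rule Bochner_Integration.integral_mult_right_zero[symmetric])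
    also have "\<dots> \<le> (\<integral>z. (L (snd z) (f1 (fst z)) + L (snd z) (f2 (fst z))) / 2 - L (snd z) (g (fst z)) \<partial>P)"
      by (rule Bochner_Integration.integral_mono[OF Bochner_Integration.integrable_mult_right[OF True] irhs pw])
    finally show ?thesis using irhs_eq by simp
  next
    case False
    then have "D = 0" unfolding D_def dist2_def by (rule not_integrable_integral_eq)
    moreover have "0 \<le> (\<integral>z. (L (snd z) (f1 (fst z)) + L (snd z) (f2 (fst z))) / 2 - L (snd z) (g (fst z)) \<partial>P)"
    proof -
      have "\<forall>z. 0 \<le> (L (snd z) (f1 (fst z)) + L (snd z) (f2 (fst z))) / 2 - L (snd z) (g (fst z))"
      proof
        fix z :: "(real ^ 'm) \<times> 'y"
        have "0 \<le> \<mu> / 8 * (f1 (fst z) - f2 (fst z))^2"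
          using assms(2) by (intro mult_nonneg_nonneg) simp_all
        then show "0 \<le> (L (snd z) (f1 (fst z)) + L (snd z) (f2 (fst z))) / 2 - L (snd z) (g (fst z))"
          by (rule order_trans[OF _ pw])
      qed
      then show ?thesis by (intro integral_nonneg_AE AE_I2) blast
    qed
    ultimately show ?thesis using irhs_eq by simp
  qed
  have ra: "class_risk P L F \<le> ereal a" unfolding class_risk_def a_def using f1 by (rule INF_lower)
  have sc: "class_risk P L G \<le> ereal c" unfolding class_risk_def c_def using mid g_def by (auto intro: INF_lower)
  have "class_risk P L F \<noteq> -\<infinity>"
  proof
    assume "class_risk P L F = -\<infinity>"
    then show False using h1 by (simp add: a_def)
  qed
  then obtain r where r: "class_risk P L F = ereal r" using ra
    by (cases "class_risk P L F") auto
  have ar: "a \<le> r + \<epsilon>" using h1 r by (simp add: a_def)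
  have br: "b \<le> r + \<epsilon>" using h2 r by (simp add: b_def)
  show ?thesis
  proof (cases "class_risk P L G")
    case (real s)
    have "s \<le> c" using sc real by simp
    have "\<mu> / 8 * D \<le> r + \<epsilon> - s" using key ar br \<open>s \<le> c\<close> by argo
    then have "D \<le> 8 / \<mu> * (r - s + \<epsilon>)" using assms(2) by (simp add: field_simps)
    then show ?thesis using real r by (simp add: D_def)
  next
    case PInf
    then show ?thesis using sc by simp
  next
    case MInf
    have inf: "ereal (8 / \<mu>) * (class_risk P L F - class_risk P L G + ereal \<epsilon>) = \<infinity>"
      using MInf r assms(2) by simp
    show ?thesis unfolding inf by simp
  qed
qed

theorem theorem7:
  fixes P :: "((real ^ 'm) \<times> 'y) measure"
    and L L' :: "'y \<Rightarrow> real \<Rightarrow> real"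
    and \<mu> \<epsilon> :: real
  assumes "prob_space P"
    and "\<And>y p. (L y has_real_derivative L' y p) (at p)"
    and "\<And>y. continuous_on UNIV (L' y)"
    and "\<mu> > 0"
    and "strongly_convex_loss \<mu> L L'"
    and "\<epsilon> > 0"
  shows
    "(\<forall>n f1 f2. n \<ge> 1
        \<longrightarrow> (\<forall>f\<in>NN (2*n). integrable P (\<lambda>z. L (snd z) (f (fst z))))
        \<longrightarrow> f1 \<in> NN n \<longrightarrow> f2 \<in> NN n
        \<longrightarrow> ereal (risk P L f1) \<le> class_risk P L (NN n) + ereal \<epsilon>
        \<longrightarrow> ereal (risk P L f2) \<le> class_risk P L (NN n) + ereal \<epsilon>
        \<longrightarrow> ereal (dist2 P f1 f2)
              \<le> ereal (8 / \<mu>) * (class_risk P L (NN n) - class_risk P L (NN (2*n)) + ereal \<epsilon>))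
     \<and>
     (\<forall>d f1 f2. d \<ge> 1
        \<longrightarrow> (\<forall>f\<in>Tree (2*d). integrable P (\<lambda>z. L (snd z) (f (fst z))))
        \<longrightarrow> f1 \<in> Tree d \<longrightarrow> f2 \<in> Tree d
        \<longrightarrow> ereal (risk P L f1) \<le> class_risk P L (Tree d) + ereal \<epsilon>
        \<longrightarrow> ereal (risk P L f2) \<le> class_risk P L (Tree d) + ereal \<epsilon>
        \<longrightarrow> ereal (dist2 P f1 f2)
              \<le> ereal (8 / \<mu>) * (class_risk P L (Tree d) - class_risk P L (Tree (2*d)) + ereal \<epsilon>))"
proof (intro conjI allI impI)
  fix n :: nat and f1 f2 :: "real ^ 'm \<Rightarrow> real"
  assume A: "\<forall>f\<in>NN (2*n). integrable P (\<lambda>z. L (snd z) (f (fst z)))" "f1 \<in> NN n" "f2 \<in> NN n"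
    "ereal (risk P L f1) \<le> class_risk P L (NN n) + ereal \<epsilon>"
    "ereal (risk P L f2) \<le> class_risk P L (NN n) + ereal \<epsilon>"
  have le: "n \<le> 2*n" by simp
  show "ereal (dist2 P f1 f2)
              \<le> ereal (8 / \<mu>) * (class_risk P L (NN n) - class_risk P L (NN (2*n)) + ereal \<epsilon>)"
    by (rule generic[OF assms(1,4,5,6) A(1) NN_mono[OF le] A(2,3) NN_mid[OF A(2,3)] A(4,5)])
next
  fix d :: nat and f1 f2 :: "real ^ 'm \<Rightarrow> real"
  assume A: "\<forall>f\<in>Tree (2*d). integrable P (\<lambda>z. L (snd z) (f (fst z)))" "f1 \<in> Tree d" "f2 \<in> Tree d"
    "ereal (risk P L f1) \<le> class_risk P L (Tree d) + ereal \<epsilon>"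
    "ereal (risk P L f2) \<le> class_risk P L (Tree d) + ereal \<epsilon>"
  have le: "d \<le> 2*d" by simp
  show "ereal (dist2 P f1 f2)
              \<le> ereal (8 / \<mu>) * (class_risk P L (Tree d) - class_risk P L (Tree (2*d)) + ereal \<epsilon>)"
    by (rule generic[OF assms(1,4,5,6) A(1) Tree_mono[OF le] A(2,3) Tree_mid[OF A(2,3)] A(4,5)])
qed

end
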